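(* Let $q_1,q_2$ each be functions as in the context and define $c(t)=\int_{-\infty}^{\infty}e^{-q_1(v)}e^{-q_2(t-v)}\,dv$ for $t\in\mathbb{R}$. Then $c$ is an even, strictly positive function on $\mathbb{R}$ with $c'(t)<0$ for all $t>0$; equivalently $c(t)=e^{-g(t)}$ for an even function $g$ with $g'(t)>0$ for all $t>0$.
   Context: A function $q:\mathbb{R}\to\mathbb{R}$ is "as in the context" if it has the form $q(t)=k\,t^{2m}e^{\mu t^2}\prod_n\left(1+t^2/\beta_n^2\right)$, where $k>0$, $\mu\ge 0$, $m$ is a positive integer, and $(\beta_n)$ is a finite or infinite sequence of nonzero real numbers with $\sum_n \beta_n^{-2}<\infty$ (the product is taken to be $1$ if there are no $\beta_n$), and there exist constants $T>0$ and $\alpha>0$ such that $q(t)>t^{2+\alpha}$ for all real $t\ge T$. *)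

theory Defs
  imports "HOL-Analysis.Analysis"
begin

text \<open>A function q is "as in the context": q(t) = k t^(2m) e^(mu t^2) prod_n (1 + t^2/beta_n^2),
  with the (finite or infinite) sequence beta indexed by an arbitrary index set I of naturals
  (I finite: finite sequence; I infinite: infinite sequence).\<close>
definition as_in_context :: "(real \<Rightarrow> real) \<Rightarrow> bool" where
  "as_in_context q \<longleftrightarrow>
     (\<exists>(k::real) (\<mu>::real) (m::nat) (I::nat set) (\<beta>::nat \<Rightarrow> real).
        k > 0 \<and> \<mu> \<ge> 0 \<and> m > 0 \<and>
        (\<forall>n\<in>I. \<beta> n \<noteq> 0) \<and>
        summable (\<lambda>n. if n \<in> I then 1 / (\<beta> n)^2 else 0) \<and>
        (\<forall>t. q t = k * t^(2*m) * exp (\<mu> * t^2) *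
                    (\<Prod>n. if n \<in> I then 1 + t^2 / (\<beta> n)^2 else 1)) \<and>
        (\<exists>T>0. \<exists>\<alpha>>0. \<forall>t\<ge>T. q t > t powr (2 + \<alpha>)))"

end

theory Submission imports Defs "HOL-Probability.Distributions" begin

lemma gauss_int:
  fixes k :: real assumes k: "k > 0"
  shows "integrable lborel (\<lambda>x. exp (- k * x\<^sup>2))"
    and "integrable lborel (\<lambda>x. exp (- k * x\<^sup>2) * \<bar>x\<bar>)"
proof -
  define \<sigma> where "\<sigma> = sqrt (1 / (2 * k))"
  have sp: "\<sigma> > 0" using k by (simp add: \<sigma>_def)
  have s2: "\<sigma>\<^sup>2 = 1 / (2*k)" using k by (simp add: \<sigma>_def)
  define A where "A = sqrt (2 * pi * \<sigma>\<^sup>2)"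
  have eq: "exp (- k * x\<^sup>2) = A * normal_density 0 \<sigma> x" for x
  proof -
    have "A * normal_density 0 \<sigma> x = A * (1 / A) * exp (- x\<^sup>2 / (2 * \<sigma>\<^sup>2))"
      unfolding normal_density_def A_def by simp
    also have "A * (1 / A) = 1" using sp unfolding A_def by simp
    also have "- x\<^sup>2 / (2 * \<sigma>\<^sup>2) = - k * x\<^sup>2" using k unfolding s2 by (simp add: field_simps)
    finally show ?thesis by simp
  qed
  show "integrable lborel (\<lambda>x. exp (- k * x\<^sup>2))"
    unfolding eq using sp by (intro integrable_mult_right integrable_normal_density) auto
  have "integrable lborel (\<lambda>x. A * (normal_density 0 \<sigma> x * \<bar>x - 0\<bar>^1))"
    using sp by (intro integrable_mult_right integrable_normal_moment_abs) auto
  then show "integrable lborel (\<lambda>x. exp (- k * x\<^sup>2) * \<bar>x\<bar>)"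
    unfolding eq by (simp add: mult.assoc)
qed

lemma AE_lborel_False: "\<not> (AE x in (lborel::real measure). False)"
  using AE_iff_measurable[of UNIV lborel "\<lambda>_. False"] by simp

lemma quot_bound:
  fixes f f' :: "real \<Rightarrow> real"
  assumes d: "\<And>x. (f has_real_derivative f' x) (at x)"
    and b: "\<And>x. \<bar>f' x\<bar> \<le> B * (1 + \<bar>x\<bar>)" and h: "h \<noteq> 0"
  shows "\<bar>(f (x + h) - f x) / h\<bar> \<le> B * (1 + \<bar>x\<bar> + \<bar>h\<bar>)"
proof -
  have B0: "B \<ge> 0" using b[of 0] by simp
  have key: "\<bar>f' z\<bar> \<le> B * (1 + \<bar>x\<bar> + \<bar>h\<bar>)" if "\<bar>z - x\<bar> \<le> \<bar>h\<bar>" for z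
  proof -
    have "B * (1 + \<bar>z\<bar>) \<le> B * (1 + \<bar>x\<bar> + \<bar>h\<bar>)"
      using that B0 by (intro mult_left_mono) auto
    then show ?thesis using b[of z] by linarith
  qed
  show ?thesis
  proof (cases "h > 0")
    case True
    from MVT2[of x "x+h" f f'] True d obtain z where z: "x < z" "z < x + h"
      "f (x + h) - f x = (x + h - x) * f' z" by auto
    then have "(f (x + h) - f x) / h = f' z" using h by simp
    then show ?thesis using key[of z] z by simp
  next
    case False
    then have hn: "h < 0" using h by simp
    from MVT2[of "x+h" x f f'] hn d obtain z where z: "x + h < z" "z < x"
      "f x - f (x + h) = (x - (x + h)) * f' z" by auto
    then have "(f (x + h) - f x) / h = f' z" using h by (simp add: field_simps)
    then show ?thesis using key[of z] z by simp
  qed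
qed

lemma deriv_seq:
  fixes f :: "real \<Rightarrow> real" and f' :: real
  assumes "(f has_real_derivative f') (at x)" "\<And>i. X i \<noteq> 0" "X \<longlonglongrightarrow> 0"
  shows "(\<lambda>i. (f (x + X i) - f x) / X i) \<longlonglongrightarrow> f'"
proof -
  have "((\<lambda>h. (f (x + h) - f x) / h) \<longlongrightarrow> f') (at 0)"
    using assms(1) by (simp add: DERIV_def)
  then show ?thesis
    unfolding tendsto_at_iff_sequentially using assms(2,3) by (auto simp: o_def)
qed

lemma deriv_measurable:
  fixes f f' :: "real \<Rightarrow> real"
  assumes d: "\<And>x. (f has_real_derivative f' x) (at x)"
  shows "f' \<in> borel_measurable borel"
proof -
  have fc: "continuous_on UNIV f"
    using d by (meson DERIV_isCont continuous_at_imp_continuous_on)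
  have fm[measurable]: "f \<in> borel_measurable borel"
    using fc by (rule borel_measurable_continuous_onI)
  show ?thesis
  proof (rule borel_measurable_LIMSEQ_real[where u="\<lambda>i x. (f (x + inverse (real (Suc i))) - f x) / inverse (real (Suc i))"])
    fix x
    show "(\<lambda>i. (f (x + inverse (real (Suc i))) - f x) / inverse (real (Suc i))) \<longlonglongrightarrow> f' x"
      by (rule deriv_seq[OF d _ LIMSEQ_inverse_real_of_nat]) simp
  qed measurable
qed


lemma conv_main:
  fixes f1 f2 f2' c :: "real \<Rightarrow> real" and K k B :: real
  assumes f1c: "continuous_on UNIV f1"
    and f1pos: "\<And>x. f1 x > 0"
    and f1even: "\<And>x. f1 (-x) = f1 x"
    and f1dec: "\<And>a b. \<bar>a\<bar> < \<bar>b\<bar> \<Longrightarrow> f1 b < f1 a"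
    and f1g: "\<And>x. f1 x \<le> K * exp (- k * x\<^sup>2)" and k: "k > 0"
    and f2pos: "\<And>x. f2 x > 0" and f2le: "\<And>x. f2 x \<le> 1"
    and f2even: "\<And>x. f2 (-x) = f2 x"
    and d2: "\<And>x. (f2 has_real_derivative f2' x) (at x)"
    and odd: "\<And>x. f2' (-x) = - f2' x"
    and neg: "\<And>x. x > 0 \<Longrightarrow> f2' x < 0"
    and bnd: "\<And>x. \<bar>f2' x\<bar> \<le> B * (1 + \<bar>x\<bar>)"
    and cdef: "\<And>t. c t = (LBINT v. f1 v * f2 (t - v))"
  shows "(\<forall>t. c (- t) = c t) \<and> (\<forall>t. c t > 0) \<and>
         (\<forall>t>0. \<exists>D. (c has_real_derivative D) (at t) \<and> D < 0)"
proof -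
  have B0: "B \<ge> 0" using bnd[of 0] by simp
  have K0: "K > 0" using f1g[of 0] f1pos[of 0] by simp
  have m1[measurable]: "f1 \<in> borel_measurable borel"
    using f1c by (rule borel_measurable_continuous_onI)
  have f2c: "continuous_on UNIV f2"
    using d2 by (meson DERIV_isCont continuous_at_imp_continuous_on)
  have m2[measurable]: "f2 \<in> borel_measurable borel"
    using f2c by (rule borel_measurable_continuous_onI)
  have m2'[measurable]: "f2' \<in> borel_measurable borel"
    using d2 by (rule deriv_measurable)
  define G where "G x = K * exp (- k * x\<^sup>2)" for x
  have Gi: "integrable lborel G" unfolding G_def using gauss_int(1)[OF k] by simp
  have Gi2: "integrable lborel (\<lambda>x. G x * \<bar>x\<bar>)" unfolding G_def
    using integrable_mult_right[OF gauss_int(2)[OF k], of K] by (simp add: mult.assoc)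
  have G0: "G x \<ge> 0" for x using K0 by (simp add: G_def)
  have int1: "integrable lborel (\<lambda>v. f1 v * f2 (t - v))" for t
  proof (rule Bochner_Integration.integrable_bound[OF Gi])
    show "AE x in lborel. norm (f1 x * f2 (t - x)) \<le> norm (G x)"
    proof (rule AE_I2)
      fix x
      have a: "f1 x * f2 (t - x) \<le> f1 x"
        using f1pos[of x] f2le[of "t - x"] by (intro mult_left_le) auto
      have b: "norm (f1 x * f2 (t - x)) = f1 x * f2 (t - x)"
        using f1pos[of x] f2pos[of "t-x"] by simp
      have c: "norm (G x) = G x" using G0[of x] by simp
      show "norm (f1 x * f2 (t - x)) \<le> norm (G x)"
        unfolding b c using a f1g[of x] by (simp add: G_def)
    qed
  qed measurable
  define W where "W M t x = G x * (B * (1 + \<bar>t\<bar> + M + \<bar>x\<bar>))" for M t x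
  have Wi: "integrable lborel (W M t)" for M t
  proof -
    have "integrable lborel (\<lambda>x. (B * (1 + \<bar>t\<bar> + M)) * G x + B * (G x * \<bar>x\<bar>))"
      using Gi Gi2 by (intro Bochner_Integration.integrable_add integrable_mult_right) auto
    then show ?thesis unfolding W_def by (simp add: algebra_simps)
  qed
  have wbound: "\<bar>f1 x * y\<bar> \<le> W M t x" if "\<bar>y\<bar> \<le> B * (1 + \<bar>t\<bar> + M + \<bar>x\<bar>)" for x y M t
  proof -
    have "\<bar>f1 x * y\<bar> = f1 x * \<bar>y\<bar>" using f1pos[of x] by (simp add: abs_mult)
    also have "\<dots> \<le> G x * (B * (1 + \<bar>t\<bar> + M + \<bar>x\<bar>))"
      using f1pos[of x] f1g[of x] that G0[of x]
      by (intro mult_mono) (auto simp: G_def)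
    finally show ?thesis by (simp add: W_def)
  qed
  have intD: "integrable lborel (\<lambda>v. f1 v * f2' (t - v))" for t
  proof (rule Bochner_Integration.integrable_bound[OF Wi[of 0 t]])
    show "AE x in lborel. norm (f1 x * f2' (t - x)) \<le> norm (W 0 t x)"
    proof (rule AE_I2)
      fix x
      have "\<bar>f2' (t - x)\<bar> \<le> B * (1 + \<bar>t\<bar> + 0 + \<bar>x\<bar>)"
        using bnd[of "t - x"] B0 by (smt (verit, best) mult_left_mono abs_triangle_ineq4)
      from wbound[OF this] show "norm (f1 x * f2' (t - x)) \<le> norm (W 0 t x)" by simp
    qed
  qed measurable
  define D where "D t = (LBINT v. f1 v * f2' (t - v))" for t

  have ev: "c (- t) = c t" for t
  proof -
    have "c (- t) = (LBINT v. f1 (0 + -1 * v) * f2 (- t - (0 + -1 * v)))"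
      unfolding cdef by (subst lborel_integral_real_affine[where c="-1" and t=0]) auto
    also have "\<dots> = c t" unfolding cdef
      using f1even f2even by (metis add_0 minus_diff_eq mult_minus1 diff_minus_eq_add add.commute uminus_add_conv_diff)
    finally show ?thesis .
  qed

  have pos: "c t > 0" for t
  proof -
    have ge: "c t \<ge> 0" unfolding cdef
      using f1pos f2pos by (intro Bochner_Integration.integral_nonneg) (auto intro: less_imp_le)
    have "c t \<noteq> 0"
    proof
      assume "c t = 0"
      then have "AE v in lborel. f1 v * f2 (t - v) = 0"
        unfolding cdef using int1 f1pos f2pos
        by (subst (asm) integral_nonneg_eq_0_iff_AE) (auto intro!: AE_I2 less_imp_le)
      then have "AE (v::real) in lborel. False"
        by eventually_elim (metis f1pos f2pos mult_eq_0_iff less_irrefl)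
      then show False using AE_lborel_False by blast
    qed
    then show ?thesis using ge by simp
  qed

  have der: "(c has_real_derivative D t) (at t)" for t
  proof -
    have "((\<lambda>h. (c (t + h) - c t) / h) \<longlongrightarrow> D t) (at 0)"
      unfolding tendsto_at_iff_sequentially
    proof (intro allI impI)
      fix X :: "nat \<Rightarrow> real"
      assume X0: "\<forall>i. X i \<in> UNIV - {0}" and Xl: "X \<longlonglongrightarrow> 0"
      have Xn: "X i \<noteq> 0" for i using X0 by auto
      obtain M where M: "\<And>i. \<bar>X i\<bar> \<le> M"
      proof -
        have "Bseq X" using Xl by (intro convergent_imp_Bseq) (auto simp: convergent_def)
        then show ?thesis using that by (metis BseqE real_norm_def)
      qed
      define s where "s i v = f1 v * ((f2 (t - v + X i) - f2 (t - v)) / X i)" for i v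
      have sm[measurable]: "s i \<in> borel_measurable borel" for i
        unfolding s_def by measurable
      have eqi: "(c (t + X i) - c t) / X i = (LBINT v. s i v)" for i
      proof -
        have "c (t + X i) - c t = (LBINT v. f1 v * f2 (t + X i - v) - f1 v * f2 (t - v))"
          unfolding cdef using int1 by (subst Bochner_Integration.integral_diff) auto
        then have "(c (t + X i) - c t) / X i = (LBINT v. (f1 v * f2 (t + X i - v) - f1 v * f2 (t - v)) / X i)"
          by simp
        also have "\<dots> = (LBINT v. s i v)"
          unfolding s_def by (intro Bochner_Integration.integral_cong) (auto simp: algebra_simps diff_divide_distrib)
        finally show ?thesis .
      qed
      have "(\<lambda>i. LBINT v. s i v) \<longlonglongrightarrow> D t"
        unfolding D_def
      proof (rule integral_dominated_convergence[where w="W M t"])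
        show "integrable lborel (W M t)" by (rule Wi)
        show "AE v in lborel. (\<lambda>i. s i v) \<longlonglongrightarrow> f1 v * f2' (t - v)"
        proof (rule AE_I2)
          fix v
          show "(\<lambda>i. s i v) \<longlonglongrightarrow> f1 v * f2' (t - v)"
            unfolding s_def by (intro tendsto_mult tendsto_const deriv_seq[OF d2 Xn Xl])
        qed
        show "AE v in lborel. norm (s i v) \<le> W M t v" for i
        proof (rule AE_I2)
          fix v
          have qb: "\<bar>(f2 (t - v + X i) - f2 (t - v)) / X i\<bar> \<le> B * (1 + \<bar>t - v\<bar> + \<bar>X i\<bar>)"
            by (rule quot_bound[OF d2 bnd Xn])
          have "B * (1 + \<bar>t - v\<bar> + \<bar>X i\<bar>) \<le> B * (1 + \<bar>t\<bar> + M + \<bar>v\<bar>)"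
            using B0 M[of i] by (intro mult_left_mono) auto
          with qb have "\<bar>(f2 (t - v + X i) - f2 (t - v)) / X i\<bar> \<le> B * (1 + \<bar>t\<bar> + M + \<bar>v\<bar>)"
            by linarith
          from wbound[OF this] show "norm (s i v) \<le> W M t v" unfolding s_def by simp
        qed
      qed measurable
      then show "((\<lambda>h. (c (t + h) - c t) / h) \<circ> X) \<longlonglongrightarrow> D t"
        by (simp add: o_def eqi)
    qed
    then show ?thesis by (simp add: DERIV_def)
  qed

  have negD: "D t < 0" if t: "t > 0" for t
  proof -
    define H where "H u = f1 (t - u) * f2' u" for u
    define H' where "H' u = f1 (t + u) * f2' u" for u
    have HI: "integrable lborel H"
    proof -
      have "integrable lborel (\<lambda>u. f1 (t + -1 * u) * f2' (t - (t + -1 * u)))"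
        by (rule lborel_integrable_real_affine[OF intD]) simp
      then show ?thesis unfolding H_def by simp
    qed
    have DH: "D t = (LBINT u. H u)"
      unfolding D_def H_def by (subst lborel_integral_real_affine[where c="-1" and t=t]) auto
    have H'I: "integrable lborel H'"
    proof -
      have "integrable lborel (\<lambda>u. H (0 + -1 * u))"
        by (rule lborel_integrable_real_affine[OF HI]) simp
      then have "integrable lborel (\<lambda>u. - H' u)"
        unfolding H_def H'_def using odd by simp
      then show ?thesis by simp
    qed
    have DH': "D t = - (LBINT u. H' u)"
    proof -
      have "(LBINT u. H u) = (LBINT u. H (0 + -1 * u))"
        by (subst lborel_integral_real_affine[where c="-1" and t=0]) auto
      also have "\<dots> = (LBINT u. - H' u)"
        unfolding H_def H'_def using odd by simp
      finally show ?thesis using DH by simp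
    qed
    define P where "P u = H' u - H u" for u
    have PI: "integrable lborel P" unfolding P_def using HI H'I by auto
    have intP: "(LBINT u. P u) = - 2 * D t"
      unfolding P_def using HI H'I DH DH' by (subst Bochner_Integration.integral_diff) auto
    have Ppos: "P u > 0" if "u \<noteq> 0" for u
    proof (cases "u > 0")
      case True
      have "f1 (t + u) < f1 (t - u)" using t True by (intro f1dec) auto
      then show ?thesis unfolding P_def H_def H'_def
        using neg[OF True] by (simp add: algebra_simps mult_less_cancel_right)
    next
      case False
      then have un: "u < 0" using that by simp
      have "f1 (t - u) < f1 (t + u)" using t un by (intro f1dec) auto
      moreover have "f2' u > 0" using neg[of "-u"] un odd[of u] by simp
      ultimately show ?thesis unfolding P_def H_def H'_def
        by (simp add: algebra_simps mult_less_cancel_right)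
    qed
    have P0: "P 0 = 0" unfolding P_def H_def H'_def using odd[of 0] by simp
    have Pnn: "P u \<ge> 0" for u using Ppos[of u] P0 by (cases "u = 0") auto
    have "(LBINT u. P u) \<noteq> 0"
    proof
      assume "(LBINT u. P u) = 0"
      then have "AE u in lborel. P u = 0"
        using PI Pnn by (subst (asm) integral_nonneg_eq_0_iff_AE) (auto intro!: AE_I2)
      then have "AE (u::real) in lborel. False"
        using AE_lborel_singleton[of 0]
        by eventually_elim (use Ppos in \<open>force\<close>)
      then show False using AE_lborel_False by blast
    qed
    moreover have "(LBINT u. P u) \<ge> 0" using Pnn by (intro Bochner_Integration.integral_nonneg) auto
    ultimately show ?thesis using intP by simp
  qed
  show ?thesis using ev pos der negD by blast
qed

lemma L_props:
  fixes a :: "nat \<Rightarrow> real"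
  assumes a0: "\<And>n. a n \<ge> 0" and sa: "summable a"
  defines "L \<equiv> \<lambda>t. \<Sum>n. ln (1 + t\<^sup>2 * a n)"
    and "L' \<equiv> \<lambda>t. \<Sum>n. 2 * t * a n / (1 + t\<^sup>2 * a n)"
  shows "\<And>t. summable (\<lambda>n. ln (1 + t\<^sup>2 * a n))"
    and "\<And>t. (L has_real_derivative L' t) (at t)"
    and "\<And>t. L (-t) = L t"
    and "\<And>t. L' (-t) = - L' t"
    and "\<And>t. L t \<ge> 0"
    and "\<And>t. t \<ge> 0 \<Longrightarrow> L' t \<ge> 0"
    and "\<And>s t. \<bar>s\<bar> \<le> \<bar>t\<bar> \<Longrightarrow> L s \<le> L t"
    and "\<And>t. \<bar>L' t\<bar> \<le> 2 * \<bar>t\<bar> * suminf a"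
proof -
  have pos: "1 + t\<^sup>2 * a n > 0" for t n using a0[of n] by (simp add: add_pos_nonneg)
  show sl: "summable (\<lambda>n. ln (1 + t\<^sup>2 * a n))" for t
  proof (rule summable_comparison_test[OF _ summable_mult[OF sa, of "t\<^sup>2"]])
    show "\<exists>N. \<forall>n\<ge>N. norm (ln (1 + t\<^sup>2 * a n)) \<le> t\<^sup>2 * a n"
      using a0 by (intro exI[of _ 0] allI impI) (simp add: ln_add_one_self_le_self)
  qed
  have dbound: "\<bar>2 * t * a n / (1 + t\<^sup>2 * a n)\<bar> \<le> 2 * \<bar>t\<bar> * a n" for t n
  proof -
    have "\<bar>2 * t * a n / (1 + t\<^sup>2 * a n)\<bar> = 2 * \<bar>t\<bar> * a n / (1 + t\<^sup>2 * a n)"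
      using pos[of t n] a0[of n] by (simp add: abs_mult)
    also have "\<dots> \<le> 2 * \<bar>t\<bar> * a n / 1"
      using a0[of n] by (intro divide_left_mono) (auto simp: add_pos_nonneg)
    finally show ?thesis by simp
  qed
  have sd: "summable (\<lambda>n. 2 * t * a n / (1 + t\<^sup>2 * a n))" for t
  proof (rule summable_comparison_test[OF _ summable_mult[OF sa, of "2 * \<bar>t\<bar>"]])
    show "\<exists>N. \<forall>n\<ge>N. norm (2 * t * a n / (1 + t\<^sup>2 * a n)) \<le> 2 * \<bar>t\<bar> * a n"
      using dbound by auto
  qed
  show "(L has_real_derivative L' t) (at t)" for t
  proof -
    define R where "R = \<bar>t\<bar> + 1"
    have "((\<lambda>x. \<Sum>n. ln (1 + x\<^sup>2 * a n)) has_field_derivative (\<Sum>n. 2 * t * a n / (1 + t\<^sup>2 * a n))) (at t)"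
    proof (rule has_field_derivative_series'(2)[of "ball 0 R" _ _ 0])
      show "convex (ball (0::real) R)" by simp
      show "((\<lambda>x. ln (1 + x\<^sup>2 * a n)) has_field_derivative 2 * x * a n / (1 + x\<^sup>2 * a n)) (at x within ball 0 R)" for n x
        using pos[of x n] by (auto intro!: derivative_eq_intros simp: field_simps power2_eq_square)
      show "uniformly_convergent_on (ball 0 R) (\<lambda>n x. \<Sum>i<n. 2 * x * a i / (1 + x\<^sup>2 * a i))"
      proof (rule Weierstrass_m_test'[of _ _ "\<lambda>n. 2 * R * a n"])
        show "summable (\<lambda>n. 2 * R * a n)" using sa by (intro summable_mult)
        fix n and x :: real assume "x \<in> ball 0 R"
        then have "\<bar>x\<bar> \<le> R" by simp
        then have "2 * \<bar>x\<bar> * a n \<le> 2 * R * a n" using a0[of n] by (intro mult_right_mono) auto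
        then show "norm (2 * x * a n / (1 + x\<^sup>2 * a n)) \<le> 2 * R * a n"
          using dbound[of x n] by simp
      qed
      show "0 \<in> ball (0::real) R" by (simp add: R_def add_pos_nonneg)
      show "summable (\<lambda>n. ln (1 + 0\<^sup>2 * a n))" by simp
      show "t \<in> interior (ball 0 R)" by (simp add: R_def)
    qed
    then show ?thesis unfolding L_def L'_def by simp
  qed
  show "L (-t) = L t" for t unfolding L_def by simp
  show "L' (-t) = - L' t" for t unfolding L'_def
    using suminf_minus[OF sd[of t]] by simp
  show "L t \<ge> 0" for t unfolding L_def
    using sl[of t] a0 by (intro suminf_nonneg) auto
  show "L' t \<ge> 0" if "t \<ge> 0" for t unfolding L'_def
    using sd[of t] a0 pos that by (intro suminf_nonneg) auto
  show "L s \<le> L t" if "\<bar>s\<bar> \<le> \<bar>t\<bar>" for s t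
  proof -
    have "s\<^sup>2 \<le> t\<^sup>2" using that by (metis abs_le_square_iff)
    then have "ln (1 + s\<^sup>2 * a n) \<le> ln (1 + t\<^sup>2 * a n)" for n
      using pos[of s n] a0[of n] by (subst ln_le_cancel_iff) (auto intro: mult_right_mono pos)
    then show ?thesis unfolding L_def using sl by (intro suminf_le) auto
  qed
  show "\<bar>L' t\<bar> \<le> 2 * \<bar>t\<bar> * suminf a" for t
  proof -
    have sn: "summable (\<lambda>n. norm (2 * t * a n / (1 + t\<^sup>2 * a n)))"
    proof (rule summable_comparison_test[OF _ summable_mult[OF sa, of "2 * \<bar>t\<bar>"]])
      show "\<exists>N. \<forall>n\<ge>N. norm (norm (2 * t * a n / (1 + t\<^sup>2 * a n))) \<le> 2 * \<bar>t\<bar> * a n"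
        using dbound by (intro exI[of _ 0] allI impI) simp
    qed
    have "\<bar>L' t\<bar> \<le> (\<Sum>n. norm (2 * t * a n / (1 + t\<^sup>2 * a n)))"
      unfolding L'_def using summable_norm[OF sn] by simp
    also have "\<dots> \<le> (\<Sum>n. 2 * \<bar>t\<bar> * a n)"
      using sn dbound summable_mult[OF sa, of "2 * \<bar>t\<bar>"] by (intro suminf_le) auto
    also have "\<dots> = 2 * \<bar>t\<bar> * suminf a" using sa by (rule suminf_mult)
    finally show ?thesis .
  qed
qed


lemma q_props:
  fixes q :: "real \<Rightarrow> real"
  assumes "as_in_context q"
  shows "\<exists>q' k B. k > 0 \<and> (\<forall>x. (q has_real_derivative q' x) (at x)) \<and> (\<forall>x. q (-x) = q x) \<and>
    (\<forall>x. q' (-x) = - q' x) \<and> (\<forall>x>0. q' x > 0) \<and> (\<forall>x. q x \<ge> 0) \<and>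
    (\<forall>a b. \<bar>a\<bar> < \<bar>b\<bar> \<longrightarrow> q a < q b) \<and> (\<forall>x. q x \<ge> k * x\<^sup>2 - k) \<and>
    (\<forall>x. \<bar>q' x\<bar> * exp (- q x) \<le> B * (1 + \<bar>x\<bar>))"
proof -
  from assms obtain k0 \<mu> m I \<beta> where k0: "k0 > 0" and mu: "\<mu> \<ge> 0" and m: "m > 0"
    and bnz: "\<forall>n\<in>I. \<beta> n \<noteq> 0"
    and sa: "summable (\<lambda>n. if n \<in> I then 1 / (\<beta> n)^2 else 0)"
    and qdef: "\<And>t. q t = k0 * t^(2*m) * exp (\<mu> * t^2) *
                    (\<Prod>n. if n \<in> I then 1 + t^2 / (\<beta> n)^2 else 1)"
    unfolding as_in_context_def by blast
  define a where "a n = (if n \<in> I then 1 / (\<beta> n)^2 else 0)" for n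
  have a0: "a n \<ge> 0" for n by (simp add: a_def)
  have sa': "summable a" using sa by (simp add: a_def [abs_def])
  define L where "L \<equiv> \<lambda>t. \<Sum>n. ln (1 + t\<^sup>2 * a n)"
  define L' where "L' \<equiv> \<lambda>t. \<Sum>n. 2 * t * a n / (1 + t\<^sup>2 * a n)"
  note Lp = L_props[OF a0 sa', folded L_def L'_def]
  have pos: "1 + t\<^sup>2 * a n > 0" for t n using a0[of n] by (simp add: add_pos_nonneg)
  have Lp3: "L (-t) = L t" for t using Lp(3)[of t] by (simp add: L_def)
  have Lp4: "L' (-t) = - L' t" for t using Lp(4)[of t] by (simp add: L'_def)
  have Lp5: "L t \<ge> 0" for t using Lp(5)[of t] by (simp add: L_def)
  have Lp6: "t \<ge> 0 \<Longrightarrow> L' t \<ge> 0" for t using Lp(6)[of t] by (simp add: L'_def)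
  have Lp7: "\<bar>s\<bar> \<le> \<bar>t\<bar> \<Longrightarrow> L s \<le> L t" for s t using Lp(7)[of s t] by (simp add: L_def)
  have Lp8: "\<bar>L' t\<bar> \<le> 2 * \<bar>t\<bar> * suminf a" for t using Lp(8)[of t] by (simp add: L'_def)
  define E where "E t = \<mu> * t\<^sup>2 + L t" for t
  define E' where "E' t = 2 * \<mu> * t + L' t" for t
  have prod: "(\<Prod>n. if n \<in> I then 1 + t^2 / (\<beta> n)^2 else 1) = exp (L t)" for t
  proof -
    have "(\<lambda>n. if n \<in> I then 1 + t^2 / (\<beta> n)^2 else 1) = (\<lambda>n. exp (ln (1 + t\<^sup>2 * a n)))"
      using pos by (auto simp: a_def)
    then show ?thesis using prodinf_exp[OF Lp(1)[of t]] by (simp add: L_def)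
  qed
  have qE: "q t = k0 * t^(2*m) * exp (E t)" for t
    unfolding qdef prod E_def by (simp add: exp_add)
  have dE: "(E has_real_derivative E' t) (at t)" for t
    unfolding E_def[abs_def] E'_def using Lp(2)[of t]
    by (auto intro!: derivative_eq_intros simp: L'_def)
  define q' where "q' t = k0 * (real (2*m) * t^(2*m - 1) * exp (E t) + t^(2*m) * (exp (E t) * E' t))" for t
  have dq: "(q has_real_derivative q' t) (at t)" for t
  proof -
    have "((\<lambda>t. k0 * t^(2*m) * exp (E t)) has_real_derivative q' t) (at t)"
      unfolding q'_def using dE[of t]
      by (auto intro!: derivative_eq_intros simp: algebra_simps)
    moreover have "q = (\<lambda>t. k0 * t^(2*m) * exp (E t))" using qE by auto
    ultimately show ?thesis by simp
  qed
  have Eeven: "E (-t) = E t" for t using Lp3 by (simp add: E_def)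
  have E'odd: "E' (-t) = - E' t" for t using Lp4 by (simp add: E'_def)
  have E0: "E t \<ge> 0" for t using Lp5[of t] mu by (simp add: E_def)
  have Emono: "E s \<le> E t" if "\<bar>s\<bar> \<le> \<bar>t\<bar>" for s t
  proof -
    have "s\<^sup>2 \<le> t\<^sup>2" using that by (metis abs_le_square_iff)
    then show ?thesis using Lp7[OF that] mu by (simp add: E_def mult_left_mono add_mono)
  qed
  have pw: "t^(2*m) = (t\<^sup>2)^m" for t :: real by (simp add: power_mult)
  have qeven: "q (-x) = q x" for x unfolding qE using Eeven by simp
  have oddm: "odd (2*m - 1)" using m by simp
  have q'odd: "q' (-x) = - q' x" for x
    unfolding q'_def using Eeven E'odd oddm by (simp add: algebra_simps)
  have q'pos: "q' x > 0" if "x > 0" for x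
  proof -
    have "E' x \<ge> 0" using Lp6[of x] that mu by (simp add: E'_def)
    then have "t^(2*m) * (exp (E x) * E' x) \<ge> 0" if "t > 0" for t
      using that by simp
    moreover have "real (2*m) * x^(2*m - 1) * exp (E x) > 0" using that m by simp
    ultimately show ?thesis unfolding q'_def using k0 that by (simp add: add_pos_nonneg)
  qed
  have qnn: "q x \<ge> 0" for x unfolding qE pw using k0 by simp
  have qmono: "q a < q b" if "\<bar>a\<bar> < \<bar>b\<bar>" for a b
  proof -
    have "\<bar>a\<bar>^2 < \<bar>b\<bar>^2" by (rule power_strict_mono) (use that in auto)
    then have ab: "a\<^sup>2 < b\<^sup>2" by simp
    have p: "(a\<^sup>2)^m < (b\<^sup>2)^m" by (rule power_strict_mono[OF ab]) (use m in auto)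
    have e: "exp (E a) \<le> exp (E b)" using Emono[of a b] that by simp
    have "(a\<^sup>2)^m * exp (E a) \<le> (a\<^sup>2)^m * exp (E b)" using e by (intro mult_left_mono) auto
    also have "\<dots> < (b\<^sup>2)^m * exp (E b)" using p by simp
    finally show ?thesis unfolding qE pw using k0 by (simp add: mult.assoc)
  qed
  have growth: "q x \<ge> k0 * x\<^sup>2 - k0" for x
  proof (cases "\<bar>x\<bar> \<ge> 1")
    case True
    have "1 \<le> \<bar>x\<bar>^2" using True by (intro one_le_power) 
    then have x1: "x\<^sup>2 \<ge> 1" by simp
    have "x\<^sup>2 = (x\<^sup>2)^1" by simp
    also have "\<dots> \<le> (x\<^sup>2)^m" using m x1 by (intro power_increasing) auto
    also have "\<dots> \<le> (x\<^sup>2)^m * exp (E x)" using E0[of x] by (simp add: mult_le_cancel_left1)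
    finally have "k0 * x\<^sup>2 \<le> k0 * ((x\<^sup>2)^m * exp (E x))" using k0 by simp
    then have "k0 * x\<^sup>2 - k0 \<le> k0 * ((x\<^sup>2)^m * exp (E x))" using k0 by linarith
    then show ?thesis unfolding qE pw by (simp add: mult.assoc)
  next
    case False
    then have "\<bar>x\<bar>^2 \<le> 1" by (intro power_le_one) auto
    then have "x\<^sup>2 \<le> 1" by simp
    then have "k0 * x\<^sup>2 - k0 \<le> 0" using k0 by (simp add: mult_le_cancel_left1)
    then show ?thesis using qnn[of x] by linarith
  qed
  define S where "S = suminf a"
  have S0: "S \<ge> 0" unfolding S_def using sa' a0 by (intro suminf_nonneg)
  define C0 where "C0 = 2 * \<mu> + 2 * S"
  have C00: "C0 \<ge> 0" using mu S0 by (simp add: C0_def)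
  have E'b: "\<bar>E' x\<bar> \<le> C0 * \<bar>x\<bar>" for x
  proof -
    have "\<bar>E' x\<bar> \<le> \<bar>2 * \<mu> * x\<bar> + \<bar>L' x\<bar>" unfolding E'_def by (rule abs_triangle_ineq)
    also have "\<dots> \<le> 2 * \<mu> * \<bar>x\<bar> + 2 * \<bar>x\<bar> * S" using Lp8[of x] mu by (simp add: S_def abs_mult)
    finally show ?thesis by (simp add: C0_def algebra_simps)
  qed
  define B where "B = 2 * real m + C0 + k0 * exp (E 1) * (2 * real m + C0)"
  have bound: "\<bar>q' x\<bar> * exp (- q x) \<le> B * (1 + \<bar>x\<bar>)" for x
  proof -
    define P where "P = \<bar>x\<bar>^(2*m - 1)"
    have P0: "P \<ge> 0" by (simp add: P_def)
    have px: "\<bar>x\<bar>^(2*m) = \<bar>x\<bar> * P"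
    proof -
      have "2*m = Suc (2*m - 1)" using m by simp
      then show ?thesis unfolding P_def by (metis power_Suc)
    qed
    have qa: "q x = k0 * exp (E x) * (\<bar>x\<bar> * P)"
    proof -
      have "x^(2*m) = \<bar>x\<bar>^(2*m)" by (simp add: power_even_abs)
      then show ?thesis unfolding qE px by simp
    qed
    have q'a: "\<bar>q' x\<bar> \<le> k0 * exp (E x) * (P * (2 * real m + C0 * x\<^sup>2))"
    proof -
      have "\<bar>q' x\<bar> = k0 * exp (E x) * \<bar>real (2*m) * x^(2*m - 1) + x^(2*m) * E' x\<bar>"
      proof -
        have "q' x = (k0 * exp (E x)) * (real (2*m) * x^(2*m - 1) + x^(2*m) * E' x)"
          unfolding q'_def by (simp add: algebra_simps)
        then show ?thesis using k0 by (simp only: abs_mult) simp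
      qed
      also have "\<bar>real (2*m) * x^(2*m - 1) + x^(2*m) * E' x\<bar> \<le> real (2*m) * P + \<bar>x\<bar> * P * (C0 * \<bar>x\<bar>)"
      proof -
        have "\<bar>real (2*m) * x^(2*m - 1) + x^(2*m) * E' x\<bar> \<le> \<bar>real (2*m) * x^(2*m - 1)\<bar> + \<bar>x^(2*m) * E' x\<bar>"
          by (rule abs_triangle_ineq)
        also have "\<bar>real (2*m) * x^(2*m - 1)\<bar> = real (2*m) * P" by (simp add: P_def abs_mult power_abs)
        also have "\<bar>x^(2*m) * E' x\<bar> = \<bar>x\<bar> * P * \<bar>E' x\<bar>" by (simp add: abs_mult power_abs px)
        also have "\<dots> \<le> \<bar>x\<bar> * P * (C0 * \<bar>x\<bar>)" using E'b[of x] P0 by (intro mult_left_mono) auto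
        finally show ?thesis by simp
      qed
      also have "real (2*m) * P + \<bar>x\<bar> * P * (C0 * \<bar>x\<bar>) = P * (2 * real m + C0 * x\<^sup>2)"
        by (simp add: algebra_simps power2_eq_square abs_mult_self_eq)
      finally show ?thesis using k0 by (simp add: mult_left_mono)
    qed
    have eq1: "exp (- q x) \<le> 1" using qnn[of x] by simp
    show ?thesis
    proof (cases "\<bar>x\<bar> \<ge> 1")
      case True
      have "P * (2 * real m + C0 * x\<^sup>2) \<le> (\<bar>x\<bar> * P) * (2 * real m + C0 * \<bar>x\<bar>)"
      proof -
        have "P * (2 * real m) \<le> (\<bar>x\<bar> * P) * (2 * real m)" using True P0 by (intro mult_right_mono) (auto simp: mult_le_cancel_right1)
        moreover have "P * (C0 * x\<^sup>2) = (\<bar>x\<bar> * P) * (C0 * \<bar>x\<bar>)" by (simp add: power2_eq_square abs_mult_self_eq algebra_simps)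
        ultimately have "P * (2 * real m) + P * (C0 * x\<^sup>2) \<le> (\<bar>x\<bar> * P) * (2 * real m) + (\<bar>x\<bar> * P) * (C0 * \<bar>x\<bar>)"
          by linarith
        then show ?thesis by (simp only: distrib_left)
      qed
      then have "k0 * exp (E x) * (P * (2 * real m + C0 * x\<^sup>2)) \<le> k0 * exp (E x) * ((\<bar>x\<bar> * P) * (2 * real m + C0 * \<bar>x\<bar>))"
        using k0 by (intro mult_left_mono) auto
      then have "\<bar>q' x\<bar> \<le> q x * (2 * real m + C0 * \<bar>x\<bar>)"
        using q'a unfolding qa by (simp add: mult.assoc)
      then have "\<bar>q' x\<bar> * exp (- q x) \<le> (q x * exp (- q x)) * (2 * real m + C0 * \<bar>x\<bar>)"
        by (simp add: mult_right_mono mult_ac)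
      also have "q x * exp (- q x) \<le> 1"
      proof -
        have "q x \<le> exp (q x)" using exp_ge_add_one_self[of "q x"] by linarith
        then show ?thesis by (simp add: exp_minus field_simps)
      qed
      then have "(q x * exp (- q x)) * (2 * real m + C0 * \<bar>x\<bar>) \<le> 1 * (2 * real m + C0 * \<bar>x\<bar>)"
        using C00 by (intro mult_right_mono) auto
      also have "\<dots> \<le> B * (1 + \<bar>x\<bar>)"
      proof -
        have "2 * real m + C0 * \<bar>x\<bar> \<le> (2 * real m + C0) * (1 + \<bar>x\<bar>)" using C00 by (simp add: algebra_simps)
        also have "\<dots> \<le> B * (1 + \<bar>x\<bar>)" using k0 C00 by (intro mult_right_mono) (auto simp: B_def)
        finally show ?thesis by simp
      qed
      finally show ?thesis .
    next
      case False
      have P1: "P \<le> 1" unfolding P_def using False by (intro power_le_one) auto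
      have "\<bar>x\<bar>^2 \<le> 1" using False by (intro power_le_one) auto
      then have x2: "x\<^sup>2 \<le> 1" by simp
      have eE: "exp (E x) \<le> exp (E 1)" using Emono[of x 1] False by simp
      have "P * (2 * real m + C0 * x\<^sup>2) \<le> 1 * (2 * real m + C0)"
        using P1 P0 x2 C00 by (intro mult_mono) (auto intro: mult_left_le)
      then have "k0 * exp (E x) * (P * (2 * real m + C0 * x\<^sup>2)) \<le> k0 * exp (E x) * (1 * (2 * real m + C0))"
        using k0 by (intro mult_left_mono) auto
      also have "\<dots> \<le> k0 * exp (E 1) * (1 * (2 * real m + C0))"
        using k0 eE C00 by (intro mult_right_mono mult_left_mono) auto
      finally have "\<bar>q' x\<bar> \<le> k0 * exp (E 1) * (2 * real m + C0)" using q'a by simp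
      then have "\<bar>q' x\<bar> * exp (- q x) \<le> k0 * exp (E 1) * (2 * real m + C0)"
        using eq1 by (meson abs_ge_zero mult_left_le order_trans)
      also have "\<dots> \<le> B" using C00 by (simp add: B_def)
      also have "B \<le> B * (1 + \<bar>x\<bar>)"
      proof -
        have "B \<ge> 0" using C00 k0 unfolding B_def by (intro add_nonneg_nonneg mult_nonneg_nonneg) auto
        then show ?thesis by (simp add: algebra_simps)
      qed
      finally show ?thesis .
    qed
  qed
  show ?thesis
    using k0 dq qeven q'odd q'pos qnn qmono growth bound by blast
qed


theorem mainTheorem6:
  fixes q1 q2 c :: "real \<Rightarrow> real"
  assumes "as_in_context q1" and "as_in_context q2"
    and "\<And>t. c t = (LBINT v. exp (- q1 v) * exp (- q2 (t - v)))"
  shows "(\<forall>t. c (- t) = c t) \<and> (\<forall>t. c t > 0) \<and>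
         (\<forall>t>0. \<exists>D. (c has_real_derivative D) (at t) \<and> D < 0)"
proof -
  obtain q1' k1 B1 where k1: "k1 > 0" and d1: "\<forall>x. (q1 has_real_derivative q1' x) (at x)"
    and e1: "\<forall>x. q1 (-x) = q1 x" and nn1: "\<forall>x. q1 x \<ge> 0"
    and mono1: "\<forall>a b. \<bar>a\<bar> < \<bar>b\<bar> \<longrightarrow> q1 a < q1 b" and g1: "\<forall>x. q1 x \<ge> k1 * x\<^sup>2 - k1"
    using q_props[OF assms(1)] by blast
  obtain q2' k2 B2 where d2: "\<forall>x. (q2 has_real_derivative q2' x) (at x)"
    and e2: "\<forall>x. q2 (-x) = q2 x" and o2: "\<forall>x. q2' (-x) = - q2' x"
    and p2: "\<forall>x>0. q2' x > 0" and nn2: "\<forall>x. q2 x \<ge> 0"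
    and b2: "\<forall>x. \<bar>q2' x\<bar> * exp (- q2 x) \<le> B2 * (1 + \<bar>x\<bar>)"
    using q_props[OF assms(2)] by blast
  show ?thesis
  proof (rule conv_main[of "\<lambda>x. exp (- q1 x)" "exp k1" k1 "\<lambda>x. exp (- q2 x)"
        "\<lambda>x. - q2' x * exp (- q2 x)" B2 c])
    have "continuous_on UNIV q1"
      using d1 by (meson DERIV_isCont continuous_at_imp_continuous_on)
    then show "continuous_on UNIV (\<lambda>x. exp (- q1 x))"
      by (intro continuous_on_exp continuous_on_minus)
    show "\<And>x. exp (- q1 x) > 0" by simp
    show "\<And>x. exp (- q1 (- x)) = exp (- q1 x)" using e1 by simp
    show "\<And>a b. \<bar>a\<bar> < \<bar>b\<bar> \<Longrightarrow> exp (- q1 b) < exp (- q1 a)" using mono1 by simp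
    show "\<And>x. exp (- q1 x) \<le> exp k1 * exp (- k1 * x\<^sup>2)"
    proof -
      fix x
      have "- q1 x \<le> k1 + - k1 * x\<^sup>2" using g1[rule_format, of x] by simp
      then have "exp (- q1 x) \<le> exp (k1 + - k1 * x\<^sup>2)" by (simp only: exp_le_cancel_iff)
      also have "\<dots> = exp k1 * exp (- k1 * x\<^sup>2)" by (rule exp_add)
      finally show "exp (- q1 x) \<le> exp k1 * exp (- k1 * x\<^sup>2)" .
    qed
    show "k1 > 0" by (rule k1)
    show "\<And>x. exp (- q2 x) > 0" by simp
    show "\<And>x. exp (- q2 x) \<le> 1" using nn2 by simp
    show "\<And>x. exp (- q2 (- x)) = exp (- q2 x)" using e2 by simp
    show "\<And>x. ((\<lambda>x. exp (- q2 x)) has_real_derivative - q2' x * exp (- q2 x)) (at x)"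
      using d2 by (auto intro!: derivative_eq_intros)
    show "\<And>x. - q2' (- x) * exp (- q2 (- x)) = - (- q2' x * exp (- q2 x))"
      using o2 e2 by simp
    show "\<And>x. x > 0 \<Longrightarrow> - q2' x * exp (- q2 x) < 0" using p2 by simp
    show "\<And>x. \<bar>- q2' x * exp (- q2 x)\<bar> \<le> B2 * (1 + \<bar>x\<bar>)"
      using b2 by (simp add: abs_mult)
    show "\<And>t. c t = (LBINT v. exp (- q1 v) * exp (- q2 (t - v)))" by (rule assms(3))
  qed
qed

end
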